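(* Let $\mathcal G=(V_{\min},V_{\max},E,w,\lambda)$ be a discounted payoff game, not all of whose joint strategies are co-optimal, with contraction $\lambda^*$ and gap $\gamma$, and let $0<\varepsilon\le\frac{1-\lambda^*}{3}\gamma$. Let $\mathcal G'=(V_{\min},V_{\max},E,w',\lambda)$ be obtained from $\mathcal G$ by adding to every edge weight a value drawn independently and uniformly at random from $(-\varepsilon,\varepsilon)$. Then every joint strategy that is co-optimal for $\mathcal G'$ is also co-optimal for $\mathcal G$, and $\mathcal G'$ is almost surely sharp.
   Context: A discounted payoff game is a tuple $\mathcal G=(V_{\min},V_{\max},E,w,\lambda)$ with $V=V_{\min}\cup V_{\max}$ finite (disjoint union of Min and Max vertices), $E\subseteq V\times V$ with every vertex having an outgoing edge, $w:E\to\mathbb R$, $\lambda:E\to[0,1)$. The outcome of a play $e_0e_1\ldots$ is $\sum_{i\ge0}w_{e_i}\prod_{j<i}\lambda_{e_j}$. A joint strategy is a map $\sigma:V\to V$ with $(v,\sigma(v))\in E$; $\mathrm{val}(\sigma)(v)$ is the outcome of the play from $v$ following $\sigma$; the game value $\mathrm{val}(\mathcal G)(v)$ is $\sup_{\sigma_{\max}}\inf_{\sigma_{\min}}$ of the outcome from $v$ over positional strategies; $\sigma$ is co-optimal iff $\mathrm{val}(\sigma)=\mathrm{val}(\mathcal G)$. $\mathsf{offset}(x,(v,v'))=x(v)-(w_{(v,v')}+\lambda_{(v,v')}x(v'))$ if $v\in V_{\max}$, and $(w_{(v,v')}+\lambda_{(v,v')}x(v'))-x(v)$ otherwise. Contraction: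 $\lambda^*=\max_e\lambda_e$. For non-co-optimal $\sigma$, $\gamma_\sigma=-\min\{\mathsf{offset}(\mathrm{val}(\sigma),e)\mid e\in E\}$; the gap $\gamma$ is the minimum of $\gamma_\sigma$ over all non-co-optimal joint strategies. $H$ is the system of inequations over $x\in\mathbb R^V$ containing, for each edge $e=(v,v')$, $x(v)\ge w_e+\lambda_e x(v')$ if $v\in V_{\max}$ and $\le$ if $v\in V_{\min}$. A basis of $H$ is a set of $|V|$ inequations whose equality versions have a unique common solution; if it satisfies $H$ it is the basis valuation. The game is sharp if every basis valuation satisfies exactly $|V|$ inequations of $H$ with equality. *)

theory Defs
  imports "HOL-Analysis.Analysis"
begin

(* A discounted payoff game over the finite vertex type 'v:
   Vmax :: 'v set are the Max vertices, V_min = UNIV - Vmax (disjoint union = all of V). *)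

definition discounted_game :: "('v::finite \<times> 'v) set \<Rightarrow> ('v \<times> 'v \<Rightarrow> real) \<Rightarrow> bool" where
  "discounted_game E lam \<longleftrightarrow>
     (\<forall>v. \<exists>v'. (v, v') \<in> E) \<and> (\<forall>e\<in>E. 0 \<le> lam e \<and> lam e < 1)"

definition joint_strategy :: "('v \<times> 'v) set \<Rightarrow> ('v \<Rightarrow> 'v) \<Rightarrow> bool" where
  "joint_strategy E \<sigma> \<longleftrightarrow> (\<forall>v. (v, \<sigma> v) \<in> E)"

definition play :: "('v \<Rightarrow> 'v) \<Rightarrow> 'v \<Rightarrow> nat \<Rightarrow> 'v" where
  "play \<sigma> v i = (\<sigma> ^^ i) v"

definition strat_val :: "('v \<times> 'v \<Rightarrow> real) \<Rightarrow> ('v \<times> 'v \<Rightarrow> real) \<Rightarrow> ('v \<Rightarrow> 'v) \<Rightarrow> 'v \<Rightarrow> real" where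
  "strat_val w lam \<sigma> v =
     (\<Sum>i. w (play \<sigma> v i, play \<sigma> v (Suc i)) *
            (\<Prod>j<i. lam (play \<sigma> v j, play \<sigma> v (Suc j))))"

(* val(G)(v) = sup over Max positional strategies of inf over Min positional strategies;
   a positional strategy of a player is represented by a joint strategy restricted to
   that player's vertices *)
definition game_val :: "'v set \<Rightarrow> ('v \<times> 'v) set \<Rightarrow> ('v \<times> 'v \<Rightarrow> real) \<Rightarrow> ('v \<times> 'v \<Rightarrow> real) \<Rightarrow> 'v \<Rightarrow> real" where
  "game_val Vmax E w lam v =
     (SUP \<sigma>1 \<in> {\<sigma>. joint_strategy E \<sigma>}. INF \<sigma>2 \<in> {\<sigma>. joint_strategy E \<sigma>}.
        strat_val w lam (\<lambda>u. if u \<in> Vmax then \<sigma>1 u else \<sigma>2 u) v)"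

definition co_optimal :: "'v set \<Rightarrow> ('v \<times> 'v) set \<Rightarrow> ('v \<times> 'v \<Rightarrow> real) \<Rightarrow> ('v \<times> 'v \<Rightarrow> real) \<Rightarrow> ('v \<Rightarrow> 'v) \<Rightarrow> bool" where
  "co_optimal Vmax E w lam \<sigma> \<longleftrightarrow>
     joint_strategy E \<sigma> \<and> strat_val w lam \<sigma> = game_val Vmax E w lam"

definition offset :: "'v set \<Rightarrow> ('v \<times> 'v \<Rightarrow> real) \<Rightarrow> ('v \<times> 'v \<Rightarrow> real) \<Rightarrow> ('v \<Rightarrow> real) \<Rightarrow> 'v \<times> 'v \<Rightarrow> real" where
  "offset Vmax w lam x e =
     (if fst e \<in> Vmax then x (fst e) - (w e + lam e * x (snd e))
      else (w e + lam e * x (snd e)) - x (fst e))"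

definition contraction :: "('v \<times> 'v) set \<Rightarrow> ('v \<times> 'v \<Rightarrow> real) \<Rightarrow> real" where
  "contraction E lam = Max (lam ` E)"

definition gamma_strat :: "'v set \<Rightarrow> ('v \<times> 'v) set \<Rightarrow> ('v \<times> 'v \<Rightarrow> real) \<Rightarrow> ('v \<times> 'v \<Rightarrow> real) \<Rightarrow> ('v \<Rightarrow> 'v) \<Rightarrow> real" where
  "gamma_strat Vmax E w lam \<sigma> = - Min (offset Vmax w lam (strat_val w lam \<sigma>) ` E)"

definition gap :: "'v::finite set \<Rightarrow> ('v \<times> 'v) set \<Rightarrow> ('v \<times> 'v \<Rightarrow> real) \<Rightarrow> ('v \<times> 'v \<Rightarrow> real) \<Rightarrow> real" where
  "gap Vmax E w lam =
     Min (gamma_strat Vmax E w lam ` {\<sigma>. joint_strategy E \<sigma> \<and> \<not> co_optimal Vmax E w lam \<sigma>})"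

definition satisfies_H :: "'v set \<Rightarrow> ('v \<times> 'v) set \<Rightarrow> ('v \<times> 'v \<Rightarrow> real) \<Rightarrow> ('v \<times> 'v \<Rightarrow> real) \<Rightarrow> ('v \<Rightarrow> real) \<Rightarrow> bool" where
  "satisfies_H Vmax E w lam x \<longleftrightarrow>
     (\<forall>(v, v') \<in> E. if v \<in> Vmax then x v \<ge> w (v, v') + lam (v, v') * x v'
                     else x v \<le> w (v, v') + lam (v, v') * x v')"

definition solves_eqs :: "('v \<times> 'v) set \<Rightarrow> ('v \<times> 'v \<Rightarrow> real) \<Rightarrow> ('v \<times> 'v \<Rightarrow> real) \<Rightarrow> ('v \<Rightarrow> real) \<Rightarrow> bool" where
  "solves_eqs B w lam x \<longleftrightarrow> (\<forall>(v, v') \<in> B. x v = w (v, v') + lam (v, v') * x v')"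

(* a basis of H: |V| inequations (identified with their edges) whose equality versions
   have a unique common solution *)
definition basis :: "('v::finite \<times> 'v) set \<Rightarrow> ('v \<times> 'v \<Rightarrow> real) \<Rightarrow> ('v \<times> 'v \<Rightarrow> real) \<Rightarrow> ('v \<times> 'v) set \<Rightarrow> bool" where
  "basis E w lam B \<longleftrightarrow> B \<subseteq> E \<and> card B = CARD('v) \<and> (\<exists>!x. solves_eqs B w lam x)"

definition sharp :: "'v::finite set \<Rightarrow> ('v \<times> 'v) set \<Rightarrow> ('v \<times> 'v \<Rightarrow> real) \<Rightarrow> ('v \<times> 'v \<Rightarrow> real) \<Rightarrow> bool" where
  "sharp Vmax E w lam \<longleftrightarrow>
     (\<forall>B x. basis E w lam B \<and> solves_eqs B w lam x \<and> satisfies_H Vmax E w lam x \<longrightarrow>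
        card {e \<in> E. solves_eqs {e} w lam x} = CARD('v))"

end

theory Submission
  imports Defs "HOL-Probability.Probability"
begin


lemma disc_lam: "discounted_game E lam \<Longrightarrow> e \<in> E \<Longrightarrow> 0 \<le> lam e \<and> lam e < 1"
  unfolding discounted_game_def by auto

lemma contr_props:
  fixes E :: "('v::finite \<times> 'v) set"
  assumes "discounted_game E lam"
  shows "0 \<le> contraction E lam" "contraction E lam < 1" "\<And>e. e \<in> E \<Longrightarrow> lam e \<le> contraction E lam"
proof -
  have fin: "finite (lam ` E)" by simp
  obtain v v' where "(v, v') \<in> E" using assms unfolding discounted_game_def by blast
  hence ne: "lam ` E \<noteq> {}" by auto
  obtain e0 where e0: "e0 \<in> E" "contraction E lam = lam e0"
    using Max_in[OF fin ne] unfolding contraction_def by auto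
  show "0 \<le> contraction E lam" "contraction E lam < 1" using e0 disc_lam[OF assms e0(1)] by auto
  show "\<And>e. e \<in> E \<Longrightarrow> lam e \<le> contraction E lam" unfolding contraction_def using fin by auto
qed

lemma play_Suc: "play \<sigma> v (Suc i) = play \<sigma> (\<sigma> v) i"
  unfolding play_def by (metis funpow_Suc_right comp_apply)

lemma play_0: "play \<sigma> v 0 = v" unfolding play_def by simp

lemma play_edge: "joint_strategy E \<sigma> \<Longrightarrow> (play \<sigma> v i, play \<sigma> v (Suc i)) \<in> E"
  unfolding joint_strategy_def play_def by simp

lemma val_summable:
  fixes E :: "('v::finite \<times> 'v) set"
  assumes g: "discounted_game E lam" and j: "joint_strategy E \<sigma>"
  shows "summable (\<lambda>i. w (play \<sigma> v i, play \<sigma> v (Suc i)) *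
            (\<Prod>j<i. lam (play \<sigma> v j, play \<sigma> v (Suc j))))"
proof -
  define c where "c = contraction E lam"
  define W where "W = Max ((\<lambda>e. \<bar>w e\<bar>) ` E)"
  have c: "0 \<le> c" "c < 1" "\<And>e. e \<in> E \<Longrightarrow> lam e \<le> c" using contr_props[OF g] c_def by auto
  have W: "\<And>e. e \<in> E \<Longrightarrow> \<bar>w e\<bar> \<le> W" unfolding W_def by simp
  have "summable (\<lambda>i. W * c ^ i)" using c by (intro summable_mult summable_geometric) auto
  moreover have "norm (w (play \<sigma> v i, play \<sigma> v (Suc i)) *
            (\<Prod>j<i. lam (play \<sigma> v j, play \<sigma> v (Suc j)))) \<le> W * c ^ i" for i
  proof -
    have p0: "0 \<le> (\<Prod>j<i. lam (play \<sigma> v j, play \<sigma> v (Suc j)))"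
      by (intro prod_nonneg) (use disc_lam[OF g play_edge[OF j]] in auto)
    have "(\<Prod>j<i. lam (play \<sigma> v j, play \<sigma> v (Suc j))) \<le> (\<Prod>j<i. c)"
      by (intro prod_mono) (use disc_lam[OF g play_edge[OF j]] c(3)[OF play_edge[OF j]] in auto)
    hence pc: "(\<Prod>j<i. lam (play \<sigma> v j, play \<sigma> v (Suc j))) \<le> c ^ i" by simp
    have "norm (w (play \<sigma> v i, play \<sigma> v (Suc i)) *
            (\<Prod>j<i. lam (play \<sigma> v j, play \<sigma> v (Suc j))))
        = \<bar>w (play \<sigma> v i, play \<sigma> v (Suc i))\<bar> * (\<Prod>j<i. lam (play \<sigma> v j, play \<sigma> v (Suc j)))"
      using p0 by (simp add: abs_mult)
    also have "\<dots> \<le> W * c ^ i"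
      by (intro mult_mono W play_edge[OF j] pc p0) (use W[OF play_edge[OF j], of v i] abs_ge_zero[of "w (play \<sigma> v i, play \<sigma> v (Suc i))"] in linarith)
    finally show ?thesis .
  qed
  ultimately show ?thesis by (rule summable_comparison_test'[where N=0])
qed

lemma val_rec:
  fixes E :: "('v::finite \<times> 'v) set"
  assumes g: "discounted_game E lam" and j: "joint_strategy E \<sigma>"
  shows "strat_val w lam \<sigma> v = w (v, \<sigma> v) + lam (v, \<sigma> v) * strat_val w lam \<sigma> (\<sigma> v)"
proof -
  let ?f = "\<lambda>v i. w (play \<sigma> v i, play \<sigma> v (Suc i)) *
            (\<Prod>j<i. lam (play \<sigma> v j, play \<sigma> v (Suc j)))"
  have s: "summable (?f v)" "summable (?f (\<sigma> v))" using val_summable[OF g j] by auto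
  have fs: "?f v (Suc i) = lam (v, \<sigma> v) * ?f (\<sigma> v) i" for i
    by (simp add: play_Suc prod.lessThan_Suc_shift play_0 del: prod.lessThan_Suc)
  have "strat_val w lam \<sigma> v = ?f v 0 + (\<Sum>i. ?f v (Suc i))"
    unfolding strat_val_def using suminf_split_head[OF s(1)] by simp
  also have "(\<Sum>i. ?f v (Suc i)) = lam (v, \<sigma> v) * strat_val w lam \<sigma> (\<sigma> v)"
    unfolding fs strat_val_def by (rule suminf_mult[OF s(2)])
  finally show ?thesis by (simp add: play_0 play_Suc)
qed




lemma cmp_le_gen:
  fixes E :: "('v::finite \<times> 'v) set"
  assumes g: "discounted_game E lam" and j: "joint_strategy E \<sigma>"
    and y: "\<And>v. y v = w (v, \<sigma> v) + lam (v, \<sigma> v) * y (\<sigma> v)"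
    and x: "\<And>v. x v \<ge> w (v, \<sigma> v) + lam (v, \<sigma> v) * x (\<sigma> v)"
  shows "y v \<le> x v"
proof -
  define d where "d = (\<lambda>v. y v - x v)"
  define M where "M = Max (range d)"
  have fin: "finite (range d)" by simp
  have "M \<in> range d" unfolding M_def by (rule Max_in) auto
  then obtain v0 where v0: "d v0 = M" by auto
  have le: "d u \<le> M" for u unfolding M_def using fin by simp
  have l: "0 \<le> lam (v0, \<sigma> v0)" "lam (v0, \<sigma> v0) < 1"
    using disc_lam[OF g] j unfolding joint_strategy_def by auto
  have "d v0 \<le> lam (v0, \<sigma> v0) * d (\<sigma> v0)"
    using y[of v0] x[of v0] unfolding d_def by (simp add: algebra_simps)
  also have "\<dots> \<le> lam (v0, \<sigma> v0) * M" using le l by (intro mult_left_mono) auto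
  finally have "M \<le> lam (v0, \<sigma> v0) * M" using v0 by simp
  hence "M \<le> 0" using l
    by (smt (verit) mult_less_cancel_right2)
  thus ?thesis using le[of v] unfolding d_def by simp
qed

lemma cmp_le:
  fixes E :: "('v::finite \<times> 'v) set"
  assumes g: "discounted_game E lam" and j: "joint_strategy E \<sigma>"
    and x: "\<And>v. x v \<ge> w (v, \<sigma> v) + lam (v, \<sigma> v) * x (\<sigma> v)"
  shows "strat_val w lam \<sigma> v \<le> x v"
proof (rule cmp_le_gen[OF g j, where y="strat_val w lam \<sigma>" and x=x and w=w])
  show "\<And>v. strat_val w lam \<sigma> v = w (v, \<sigma> v) + lam (v, \<sigma> v) * strat_val w lam \<sigma> (\<sigma> v)"
    by (rule val_rec[OF g j])
  show "\<And>v. x v \<ge> w (v, \<sigma> v) + lam (v, \<sigma> v) * x (\<sigma> v)" by (rule x)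
qed

lemma cmp_ge:
  fixes E :: "('v::finite \<times> 'v) set"
  assumes g: "discounted_game E lam" and j: "joint_strategy E \<sigma>"
    and x: "\<And>v. x v \<le> w (v, \<sigma> v) + lam (v, \<sigma> v) * x (\<sigma> v)"
  shows "x v \<le> strat_val w lam \<sigma> v"
proof -
  have "- strat_val w lam \<sigma> v \<le> - x v"
  proof (rule cmp_le_gen[OF g j, where w="\<lambda>e. - w e" and y="\<lambda>v. - strat_val w lam \<sigma> v" and x="\<lambda>v. - x v"])
    fix v
    have "strat_val w lam \<sigma> v = w (v, \<sigma> v) + lam (v, \<sigma> v) * strat_val w lam \<sigma> (\<sigma> v)"
      by (rule val_rec[OF g j])
    thus "- strat_val w lam \<sigma> v = - w (v, \<sigma> v) + lam (v, \<sigma> v) * - strat_val w lam \<sigma> (\<sigma> v)"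
      by simp
    have "x v \<le> w (v, \<sigma> v) + lam (v, \<sigma> v) * x (\<sigma> v)" by (rule x)
    thus "- w (v, \<sigma> v) + lam (v, \<sigma> v) * - x (\<sigma> v) \<le> - x v" by simp
  qed
  thus ?thesis by simp
qed

definition comb :: "'v set \<Rightarrow> ('v \<Rightarrow> 'v) \<Rightarrow> ('v \<Rightarrow> 'v) \<Rightarrow> 'v \<Rightarrow> 'v" where
  "comb Vmax s1 s2 = (\<lambda>u. if u \<in> Vmax then s1 u else s2 u)"

lemma joint_comb: "joint_strategy E s1 \<Longrightarrow> joint_strategy E s2 \<Longrightarrow> joint_strategy E (comb Vmax s1 s2)"
  unfolding joint_strategy_def comb_def by auto

lemma joint_ex: "discounted_game E lam \<Longrightarrow> \<exists>\<sigma>. joint_strategy E \<sigma>"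
  unfolding discounted_game_def joint_strategy_def by metis

lemma ex_min_fin:
  fixes f :: "'a \<Rightarrow> real"
  assumes "finite S" "S \<noteq> {}"
  shows "\<exists>x\<in>S. \<forall>y\<in>S. f x \<le> f y"
proof -
  have "Min (f ` S) \<in> f ` S" using assms by (intro Min_in) auto
  then obtain x where x: "x \<in> S" "f x = Min (f ` S)" by auto
  have "\<forall>y\<in>S. f x \<le> f y" using x assms by simp
  thus ?thesis using x by blast
qed

lemma min_resp:
  fixes E :: "('v::finite \<times> 'v) set"
  assumes g: "discounted_game E lam" and j1: "joint_strategy E s1"
  shows "\<exists>s2. joint_strategy E s2 \<and>
     (\<forall>v u. v \<notin> Vmax \<longrightarrow> (v, u) \<in> E \<longrightarrow>
        strat_val w lam (comb Vmax s1 s2) v \<le> w (v, u) + lam (v, u) * strat_val w lam (comb Vmax s1 s2) u)"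
proof -
  let ?J = "{\<sigma>. joint_strategy E \<sigma>}"
  let ?F = "\<lambda>s2. \<Sum>v\<in>UNIV. strat_val w lam (comb Vmax s1 s2) v"
  have "finite ?J" by simp
  moreover have "?J \<noteq> {}" using joint_ex[OF g] by auto
  ultimately have "\<exists>x\<in>?J. \<forall>y\<in>?J. ?F x \<le> ?F y" by (rule ex_min_fin)
  then obtain s2 where s2: "joint_strategy E s2" "\<And>s. joint_strategy E s \<Longrightarrow> ?F s2 \<le> ?F s"
    by blast
  show ?thesis
  proof (intro exI conjI allI impI, fact s2(1), rule ccontr)
    fix v u assume v: "v \<notin> Vmax" and e: "(v, u) \<in> E"
    let ?y = "strat_val w lam (comb Vmax s1 s2)"
    assume "\<not> ?y v \<le> w (v, u) + lam (v, u) * ?y u"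
    hence lt: "w (v, u) + lam (v, u) * ?y u < ?y v" by simp
    define s2' where "s2' = s2(v := u)"
    have j': "joint_strategy E s2'" using s2(1) e unfolding s2'_def joint_strategy_def by auto
    let ?t = "comb Vmax s1 s2'"
    have jt: "joint_strategy E ?t" by (rule joint_comb[OF j1 j'])
    have jt0: "joint_strategy E (comb Vmax s1 s2)" by (rule joint_comb[OF j1 s2(1)])
    have cond0: "?y v' \<ge> w (v', ?t v') + lam (v', ?t v') * ?y (?t v')" for v'
    proof (cases "v' = v")
      case True thus ?thesis using lt v unfolding comb_def s2'_def by simp
    next
      case False
      hence "?t v' = comb Vmax s1 s2 v'" unfolding comb_def s2'_def by simp
      thus ?thesis using val_rec[OF g jt0, of w v'] by simp
    qed
    have cond: "\<And>v'. ?y v' \<ge> w (v', ?t v') + lam (v', ?t v') * ?y (?t v')" by (rule cond0)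
    have le: "\<And>v'. strat_val w lam ?t v' \<le> ?y v'" by (rule cmp_le[OF g jt, where x="?y" and w=w], rule cond)
    have tv: "?t v = u" using v unfolding comb_def s2'_def by simp
    have "strat_val w lam ?t v = w (v, u) + lam (v, u) * strat_val w lam ?t u"
      using val_rec[OF g jt, of w v] tv by simp
    also have "\<dots> \<le> w (v, u) + lam (v, u) * ?y u"
      using le[of u] disc_lam[OF g e] by (simp add: mult_left_mono)
    also have "\<dots> < ?y v" by (rule lt)
    finally have "strat_val w lam ?t v < ?y v" .
    hence "?F s2' < ?F s2"
      by (intro sum_strict_mono_ex1) (use le in auto)
    thus False using s2(2)[OF j'] by linarith
  qed
qed




definition min_opt :: "'v set \<Rightarrow> ('v \<times> 'v) set \<Rightarrow> ('v \<times> 'v \<Rightarrow> real) \<Rightarrow> ('v \<times> 'v \<Rightarrow> real) \<Rightarrow> ('v \<Rightarrow> 'v) \<Rightarrow> ('v \<Rightarrow> 'v) \<Rightarrow> bool" where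
  "min_opt Vmax E w lam s1 s2 \<longleftrightarrow> joint_strategy E s2 \<and>
     (\<forall>v u. v \<notin> Vmax \<longrightarrow> (v, u) \<in> E \<longrightarrow>
        strat_val w lam (comb Vmax s1 s2) v \<le> w (v, u) + lam (v, u) * strat_val w lam (comb Vmax s1 s2) u)"

lemma ex_max_fin:
  fixes f :: "'a \<Rightarrow> real"
  assumes "finite S" "S \<noteq> {}"
  shows "\<exists>x\<in>S. \<forall>y\<in>S. f y \<le> f x"
proof -
  have "\<exists>x\<in>S. \<forall>y\<in>S. - f x \<le> - f y" by (rule ex_min_fin[OF assms])
  thus ?thesis by auto
qed

lemma max_sol:
  fixes E :: "('v::finite \<times> 'v) set"
  assumes g: "discounted_game E lam"
  shows "\<exists>s1 s2. joint_strategy E s1 \<and> min_opt Vmax E w lam s1 s2 \<and>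
     (\<forall>v u. v \<in> Vmax \<longrightarrow> (v, u) \<in> E \<longrightarrow>
        strat_val w lam (comb Vmax s1 s2) v \<ge> w (v, u) + lam (v, u) * strat_val w lam (comb Vmax s1 s2) u)"
proof -
  define R where "R = (\<lambda>s1. SOME s2. min_opt Vmax E w lam s1 s2)"
  have R: "min_opt Vmax E w lam s1 (R s1)" if "joint_strategy E s1" for s1
    unfolding R_def using min_resp[OF g that, of Vmax w] unfolding min_opt_def[symmetric]
    by (rule someI_ex)
  let ?J = "{\<sigma>. joint_strategy E \<sigma>}"
  let ?F = "\<lambda>s1. \<Sum>v\<in>UNIV. strat_val w lam (comb Vmax s1 (R s1)) v"
  have "finite ?J" by simp
  moreover have "?J \<noteq> {}" using joint_ex[OF g] by auto
  ultimately have "\<exists>x\<in>?J. \<forall>y\<in>?J. ?F y \<le> ?F x" by (rule ex_max_fin)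
  then obtain s1 where s1: "joint_strategy E s1" "\<And>s. joint_strategy E s \<Longrightarrow> ?F s \<le> ?F s1"
    by blast
  have R1: "min_opt Vmax E w lam s1 (R s1)" by (rule R[OF s1(1)])
  show ?thesis
  proof (intro exI conjI allI impI, fact s1(1), fact R1, rule ccontr)
    fix v u assume v: "v \<in> Vmax" and e: "(v, u) \<in> E"
    let ?y = "strat_val w lam (comb Vmax s1 (R s1))"
    assume "\<not> ?y v \<ge> w (v, u) + lam (v, u) * ?y u"
    hence lt: "?y v < w (v, u) + lam (v, u) * ?y u" by simp
    define s1' where "s1' = s1(v := u)"
    have j': "joint_strategy E s1'" using s1(1) e unfolding s1'_def joint_strategy_def by auto
    have R': "min_opt Vmax E w lam s1' (R s1')" by (rule R[OF j'])
    let ?t = "comb Vmax s1' (R s1')"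
    have jR': "joint_strategy E (R s1')" using R' unfolding min_opt_def by simp
    have jR: "joint_strategy E (R s1)" using R1 unfolding min_opt_def by simp
    have jt: "joint_strategy E ?t" by (rule joint_comb[OF j' jR'])
    have jt0: "joint_strategy E (comb Vmax s1 (R s1))" by (rule joint_comb[OF s1(1) jR])
    have cond: "\<And>v'. ?y v' \<le> w (v', ?t v') + lam (v', ?t v') * ?y (?t v')"
    proof -
      fix v'
      show "?y v' \<le> w (v', ?t v') + lam (v', ?t v') * ?y (?t v')"
      proof (cases "v' = v")
        case True thus ?thesis using lt v unfolding comb_def s1'_def by simp
      next
        case False
        show ?thesis
        proof (cases "v' \<in> Vmax")
          case True
          hence "?t v' = comb Vmax s1 (R s1) v'" using False unfolding comb_def s1'_def by simp
          thus ?thesis using val_rec[OF g jt0, of w v'] by simp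
        next
          case nv: False
          have "(v', ?t v') \<in> E" using jt unfolding joint_strategy_def by blast
          thus ?thesis using R1 nv unfolding min_opt_def by blast
        qed
      qed
    qed
    have ge: "\<And>v'. ?y v' \<le> strat_val w lam ?t v'"
      by (rule cmp_ge[OF g jt, where x="?y" and w=w], rule cond)
    have tv: "?t v = u" using v unfolding comb_def s1'_def by simp
    have "?y v < w (v, u) + lam (v, u) * ?y u" by (rule lt)
    also have "\<dots> \<le> w (v, u) + lam (v, u) * strat_val w lam ?t u"
      using ge[of u] disc_lam[OF g e] by (simp add: mult_left_mono)
    also have "\<dots> = strat_val w lam ?t v"
      using val_rec[OF g jt, of w v] tv by simp
    finally have "?y v < strat_val w lam ?t v" .
    hence "?F s1 < ?F s1'"
      by (intro sum_strict_mono_ex1) (use ge in auto)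
    thus False using s1(2)[OF j'] by linarith
  qed
qed

lemma game_sol:
  fixes E :: "('v::finite \<times> 'v) set"
  assumes g: "discounted_game E lam"
  shows "\<exists>\<sigma>. joint_strategy E \<sigma> \<and> game_val Vmax E w lam = strat_val w lam \<sigma> \<and>
           (\<forall>e\<in>E. offset Vmax w lam (strat_val w lam \<sigma>) e \<ge> 0)"
proof -
  obtain s1 s2 where s1: "joint_strategy E s1" and mo: "min_opt Vmax E w lam s1 s2"
    and mx: "\<And>v u. v \<in> Vmax \<Longrightarrow> (v, u) \<in> E \<Longrightarrow>
        strat_val w lam (comb Vmax s1 s2) v \<ge> w (v, u) + lam (v, u) * strat_val w lam (comb Vmax s1 s2) u"
    using max_sol[OF g, of Vmax w] by blast
  have s2: "joint_strategy E s2" using mo unfolding min_opt_def by simp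
  have mn: "\<And>v u. v \<notin> Vmax \<Longrightarrow> (v, u) \<in> E \<Longrightarrow>
        strat_val w lam (comb Vmax s1 s2) v \<le> w (v, u) + lam (v, u) * strat_val w lam (comb Vmax s1 s2) u"
    using mo unfolding min_opt_def by blast
  define \<sigma> where "\<sigma> = comb Vmax s1 s2"
  define x where "x = strat_val w lam \<sigma>"
  have j: "joint_strategy E \<sigma>" unfolding \<sigma>_def by (rule joint_comb[OF s1 s2])
  have xr: "\<And>v. x v = w (v, \<sigma> v) + lam (v, \<sigma> v) * x (\<sigma> v)" unfolding x_def by (rule val_rec[OF g j])
  have mx': "\<And>v u. v \<in> Vmax \<Longrightarrow> (v, u) \<in> E \<Longrightarrow> x v \<ge> w (v, u) + lam (v, u) * x u"
    using mx unfolding x_def \<sigma>_def by blast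
  have mn': "\<And>v u. v \<notin> Vmax \<Longrightarrow> (v, u) \<in> E \<Longrightarrow> x v \<le> w (v, u) + lam (v, u) * x u"
    using mn unfolding x_def \<sigma>_def by blast
  let ?J = "{\<sigma>. joint_strategy E \<sigma>}"
  have finJ: "finite ?J" by simp
  have neJ: "?J \<noteq> {}" using s1 by auto
  have gv: "game_val Vmax E w lam v = x v" for v
  proof -
    let ?f = "\<lambda>a b. strat_val w lam (\<lambda>u. if u \<in> Vmax then a u else b u) v"
    have up: "(INF b\<in>?J. ?f a b) \<le> x v" if a: "a \<in> ?J" for a
    proof -
      have ja: "joint_strategy E a" using a by simp
      let ?t = "comb Vmax a \<sigma>"
      have jt: "joint_strategy E ?t" by (rule joint_comb[OF ja j])
      have cond: "\<And>v'. x v' \<ge> w (v', ?t v') + lam (v', ?t v') * x (?t v')"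
      proof -
        fix v'
        show "x v' \<ge> w (v', ?t v') + lam (v', ?t v') * x (?t v')"
        proof (cases "v' \<in> Vmax")
          case True
          have "(v', ?t v') \<in> E" using jt unfolding joint_strategy_def by blast
          thus ?thesis using mx' True by blast
        next
          case False
          hence "?t v' = \<sigma> v'" unfolding comb_def by simp
          thus ?thesis using xr[of v'] by simp
        qed
      qed
      have "strat_val w lam ?t v \<le> x v" by (rule cmp_le[OF g jt, where x=x and w=w], rule cond)
      moreover have "(INF b\<in>?J. ?f a b) \<le> ?f a \<sigma>"
        by (rule cINF_lower) (use finJ j in auto)
      ultimately show ?thesis unfolding comb_def by simp
    qed
    have lo: "x v \<le> (INF b\<in>?J. ?f \<sigma> b)"
    proof (rule cINF_greatest)
      show "?J \<noteq> {}" by (rule neJ)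
      fix b assume b: "b \<in> ?J"
      have jb: "joint_strategy E b" using b by simp
      let ?t = "comb Vmax \<sigma> b"
      have jt: "joint_strategy E ?t" by (rule joint_comb[OF j jb])
      have cond: "\<And>v'. x v' \<le> w (v', ?t v') + lam (v', ?t v') * x (?t v')"
      proof -
        fix v'
        show "x v' \<le> w (v', ?t v') + lam (v', ?t v') * x (?t v')"
        proof (cases "v' \<in> Vmax")
          case False
          have "(v', ?t v') \<in> E" using jt unfolding joint_strategy_def by blast
          thus ?thesis using mn' False by blast
        next
          case True
          hence "?t v' = \<sigma> v'" unfolding comb_def by simp
          thus ?thesis using xr[of v'] by simp
        qed
      qed
      have "x v \<le> strat_val w lam ?t v" by (rule cmp_ge[OF g jt, where x=x and w=w], rule cond)
      thus "x v \<le> ?f \<sigma> b" unfolding comb_def by simp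
    qed
    have "game_val Vmax E w lam v = (SUP a\<in>?J. INF b\<in>?J. ?f a b)" unfolding game_val_def by simp
    also have "\<dots> = x v"
    proof (rule antisym)
      show "(SUP a\<in>?J. INF b\<in>?J. ?f a b) \<le> x v"
        by (rule cSUP_least[OF neJ]) (rule up)
      have "(INF b\<in>?J. ?f \<sigma> b) \<le> (SUP a\<in>?J. INF b\<in>?J. ?f a b)"
        by (rule cSUP_upper) (use finJ j in auto)
      thus "x v \<le> (SUP a\<in>?J. INF b\<in>?J. ?f a b)" using lo by linarith
    qed
    finally show ?thesis .
  qed
  show ?thesis
  proof (intro exI conjI ballI)
    show "joint_strategy E \<sigma>" by (rule j)
    show "game_val Vmax E w lam = strat_val w lam \<sigma>" using gv unfolding x_def by auto
    fix e assume e: "e \<in> E"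
    obtain a b where ab: "e = (a, b)" by (cases e)
    show "offset Vmax w lam (strat_val w lam \<sigma>) e \<ge> 0"
      using mx'[of a b] mn'[of a b] e unfolding ab offset_def x_def by auto
  qed
qed

lemma co_opt_offset:
  fixes E :: "('v::finite \<times> 'v) set"
  assumes g: "discounted_game E lam" and c: "co_optimal Vmax E w lam \<sigma>" and e: "e \<in> E"
  shows "offset Vmax w lam (strat_val w lam \<sigma>) e \<ge> 0"
proof -
  obtain \<tau> where t: "game_val Vmax E w lam = strat_val w lam \<tau>"
    "\<forall>e\<in>E. offset Vmax w lam (strat_val w lam \<tau>) e \<ge> 0"
    using game_sol[OF g, of Vmax w] by blast
  have "strat_val w lam \<sigma> = strat_val w lam \<tau>" using c t(1) unfolding co_optimal_def by simp
  thus ?thesis using t(2) e by simp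
qed




lemma part1:
  fixes E :: "('v::finite \<times> 'v) set"
  assumes g: "discounted_game E lam"
    and eps: "0 < \<epsilon>" "\<epsilon> \<le> (1 - contraction E lam) / 3 * gap Vmax E w lam"
    and dl: "\<forall>e\<in>E. \<delta> e \<in> {-\<epsilon><..<\<epsilon>}"
    and co: "co_optimal Vmax E (\<lambda>e. w e + \<delta> e) lam \<sigma>"
  shows "co_optimal Vmax E w lam \<sigma>"
proof (rule ccontr)
  assume nco: "\<not> co_optimal Vmax E w lam \<sigma>"
  define c where "c = contraction E lam"
  have c: "0 \<le> c" "c < 1" "\<And>e. e \<in> E \<Longrightarrow> lam e \<le> c" using contr_props[OF g] c_def by auto
  let ?w' = "\<lambda>e. w e + \<delta> e"
  have j: "joint_strategy E \<sigma>" using co unfolding co_optimal_def by simp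
  define y where "y = strat_val w lam \<sigma>"
  define y' where "y' = strat_val ?w' lam \<sigma>"
  define d where "d = (\<lambda>v. y' v - y v)"
  have dr: "d v = \<delta> (v, \<sigma> v) + lam (v, \<sigma> v) * d (\<sigma> v)" for v
  proof -
    have "y v = w (v, \<sigma> v) + lam (v, \<sigma> v) * y (\<sigma> v)" unfolding y_def by (rule val_rec[OF g j])
    moreover have "y' v = ?w' (v, \<sigma> v) + lam (v, \<sigma> v) * y' (\<sigma> v)" unfolding y'_def by (rule val_rec[OF g j])
    ultimately show ?thesis unfolding d_def by (simp add: algebra_simps)
  qed
  define D where "D = Max (range (\<lambda>v. \<bar>d v\<bar>))"
  have Dle: "\<bar>d u\<bar> \<le> D" for u unfolding D_def by simp
  have "D \<in> range (\<lambda>v. \<bar>d v\<bar>)" unfolding D_def by (rule Max_in) auto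
  then obtain v0 where v0: "\<bar>d v0\<bar> = D" by auto
  have D0: "0 \<le> D" using v0 by auto
  have dle: "\<bar>\<delta> e\<bar> < \<epsilon>" if "e \<in> E" for e using dl that by auto
  have e0: "(v0, \<sigma> v0) \<in> E" using j unfolding joint_strategy_def by blast
  have l0: "0 \<le> lam (v0, \<sigma> v0)" "lam (v0, \<sigma> v0) \<le> c" using disc_lam[OF g e0] c(3)[OF e0] by auto
  have "D \<le> \<bar>\<delta> (v0, \<sigma> v0)\<bar> + lam (v0, \<sigma> v0) * \<bar>d (\<sigma> v0)\<bar>"
  proof -
    have "D = \<bar>\<delta> (v0, \<sigma> v0) + lam (v0, \<sigma> v0) * d (\<sigma> v0)\<bar>" using v0 dr[of v0] by simp
    also have "\<dots> \<le> \<bar>\<delta> (v0, \<sigma> v0)\<bar> + \<bar>lam (v0, \<sigma> v0) * d (\<sigma> v0)\<bar>" by (rule abs_triangle_ineq)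
    also have "\<bar>lam (v0, \<sigma> v0) * d (\<sigma> v0)\<bar> = lam (v0, \<sigma> v0) * \<bar>d (\<sigma> v0)\<bar>"
      using l0(1) by (simp add: abs_mult)
    finally show ?thesis .
  qed
  also have "\<dots> \<le> \<epsilon> + c * D"
    using dle[OF e0] mult_mono[OF l0(2) Dle[of "\<sigma> v0"] c(1)] by (simp add: abs_mult)
  finally have Dc: "D \<le> \<epsilon> + c * D" .
  define K where "K = \<epsilon> / (1 - c)"
  have K0: "0 < K" unfolding K_def using eps c by simp
  have epsK: "\<epsilon> = (1 - c) * K" unfolding K_def using c by simp
  have DK: "D \<le> K"
  proof -
    have "(1 - c) * D \<le> (1 - c) * K" using Dc epsK by (simp add: algebra_simps)
    thus ?thesis using c by simp
  qed
  have gapK: "3 * K \<le> gap Vmax E w lam"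
  proof -
    have "3 * \<epsilon> \<le> (1 - c) * gap Vmax E w lam" using eps(2) unfolding c_def by simp
    hence "(1 - c) * (3 * K) \<le> (1 - c) * gap Vmax E w lam" using epsK by (simp add: algebra_simps)
    thus ?thesis using c by simp
  qed
  have off: "offset Vmax w lam y e \<ge> - (2 * K)" if e: "e \<in> E" for e
  proof -
    obtain a b where ab: "e = (a, b)" by (cases e)
    have o': "offset Vmax ?w' lam y' e \<ge> 0" unfolding y'_def by (rule co_opt_offset[OF g co e])
    have le: "0 \<le> lam e" "lam e \<le> c" using disc_lam[OF g e] c(3)[OF e] by auto
    have "\<bar>lam e * d b\<bar> \<le> c * D" using mult_mono[OF le(2) Dle[of b] c(1)] le by (simp add: abs_mult)
    hence lb: "- (c * D) \<le> lam e * d b" "lam e * d b \<le> c * D" by linarith+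
    have da: "\<bar>d a\<bar> \<le> D" by (rule Dle)
    have de: "\<bar>\<delta> e\<bar> \<le> \<epsilon>" using dle[OF e] by simp
    have "offset Vmax w lam y e \<ge> - (\<epsilon> + D + c * D)"
    proof (cases "a \<in> Vmax")
      case True
      hence "offset Vmax w lam y e = offset Vmax ?w' lam y' e - d a + \<delta> e + lam e * d b"
        unfolding offset_def ab d_def by (simp add: algebra_simps)
      thus ?thesis using o' lb da de by linarith
    next
      case False
      hence "offset Vmax w lam y e = offset Vmax ?w' lam y' e + d a - \<delta> e - lam e * d b"
        unfolding offset_def ab d_def by (simp add: algebra_simps)
      thus ?thesis using o' lb da de by linarith
    qed
    moreover have "\<epsilon> + D + c * D \<le> 2 * K"
    proof -
      have "c * D \<le> c * K" using DK c(1) by (rule mult_left_mono)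
      thus ?thesis using epsK DK by (simp add: algebra_simps)
    qed
    ultimately show ?thesis by linarith
  qed
  have finE: "finite E" by simp
  have neE: "E \<noteq> {}" using g unfolding discounted_game_def by auto
  have "Min (offset Vmax w lam y ` E) \<in> offset Vmax w lam y ` E" using finE neE by (intro Min_in) auto
  then obtain e1 where e1: "e1 \<in> E" "Min (offset Vmax w lam y ` E) = offset Vmax w lam y e1" by auto
  have gs: "gamma_strat Vmax E w lam \<sigma> \<le> 2 * K"
    unfolding gamma_strat_def y_def[symmetric] using e1 off[OF e1(1)] by linarith
  have "gap Vmax E w lam \<le> gamma_strat Vmax E w lam \<sigma>"
    unfolding gap_def by (rule Min_le) (use j nco in auto)
  thus False using gs gapK K0 by linarith
qed




lemma null_hyperplane:
  fixes E :: "'a set" and \<beta> c :: "'a \<Rightarrow> real"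
  assumes eps: "0 < \<epsilon>" and fE: "finite E" and BE: "B \<subseteq> E" and eE: "e \<in> E" and eB: "e \<notin> B"
  shows "{\<delta> \<in> space (PiM E (\<lambda>_. uniform_measure lborel {-\<epsilon><..<\<epsilon>})).
           \<delta> e = (\<Sum>e'\<in>B. (c e' + \<delta> e') * \<beta> e') - c0}
         \<in> null_sets (PiM E (\<lambda>_. uniform_measure lborel {-\<epsilon><..<\<epsilon>}))"
proof -
  define M :: "'a \<Rightarrow> real measure" where "M = (\<lambda>_. uniform_measure lborel {-\<epsilon><..<\<epsilon>})"
  define P where "P = PiM E M"
  define \<phi> where "\<phi> = (\<lambda>\<delta>::'a \<Rightarrow> real. (\<Sum>e'\<in>B. (c e' + \<delta> e') * \<beta> e') - c0)"
  define N where "N = {\<delta> \<in> space P. \<delta> e = \<phi> \<delta>}"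
  have compm: "(\<lambda>\<delta>. \<delta> e') \<in> borel_measurable P" if "e' \<in> E" for e'
  proof -
    have "(\<lambda>\<delta>. \<delta> e') \<in> P \<rightarrow>\<^sub>M M e'" unfolding P_def by (rule measurable_component_singleton[OF that])
    moreover have "sets (M e') = sets borel" unfolding M_def by simp
    ultimately show ?thesis using measurable_cong_sets[OF refl \<open>sets (M e') = sets borel\<close>, of P] by simp
  qed
  have phim: "\<phi> \<in> borel_measurable P"
    unfolding \<phi>_def
  proof (intro borel_measurable_diff borel_measurable_const borel_measurable_sum borel_measurable_times borel_measurable_add)
    fix e' assume "e' \<in> B" thus "(\<lambda>\<delta>. \<delta> e') \<in> borel_measurable P" using BE by (intro compm) auto
  qed
  have Nsets: "N \<in> sets P"
    unfolding N_def by (rule measurable_equality_set[OF compm[OF eE] phim])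
  have pM: "prob_space (M i)" for i
  proof -
    have "emeasure lborel {-\<epsilon><..<\<epsilon>} = ennreal (\<epsilon> - - \<epsilon>)" using eps by (intro emeasure_lborel_Ioo) simp
    hence "emeasure lborel {-\<epsilon><..<\<epsilon>} \<noteq> 0" "emeasure lborel {-\<epsilon><..<\<epsilon>} \<noteq> \<infinity>" using eps by auto
    thus "prob_space (M i)" unfolding M_def by (rule prob_space_uniform_measure)
  qed
  interpret product_prob_space M
    by (intro product_prob_space.intro product_sigma_finite.intro product_prob_space_axioms.intro pM
        prob_space_imp_sigma_finite)
  define I where "I = E - {e}"
  have EI: "E = insert e I" "e \<notin> I" "finite I" using eE fE unfolding I_def by auto
  have "emeasure P N = (\<integral>\<^sup>+\<delta>. indicator N \<delta> \<partial>P)" using Nsets by simp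
  also have "\<dots> = (\<integral>\<^sup>+x. (\<integral>\<^sup>+y. indicator N (x(e := y)) \<partial>M e) \<partial>PiM I M)"
  proof -
    have m: "indicator N \<in> borel_measurable (PiM (insert e I) M)"
      using Nsets unfolding P_def EI(1) by simp
    show ?thesis unfolding P_def EI(1) by (rule product_nn_integral_insert[OF EI(3) EI(2) m])
  qed
  also have "\<dots> = (\<integral>\<^sup>+x. 0 \<partial>PiM I M)"
  proof (rule nn_integral_cong)
    fix x assume x: "x \<in> space (PiM I M)"
    have ind: "indicator N (x(e := y)) = (indicator {\<phi> x} y :: ennreal)" for y
    proof -
      have xI: "x \<in> (\<Pi>\<^sub>E i\<in>I. space (M i))" using x by (simp add: space_PiM)
      have "x(e := y) \<in> (\<Pi>\<^sub>E i\<in>insert e I. space (M i))"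
        by (rule PiE_fun_upd[OF _ xI]) (simp add: M_def)
      hence sp: "x(e := y) \<in> space P" unfolding P_def EI(1)[symmetric] by (simp add: space_PiM)
      have "(\<Sum>e'\<in>B. (c e' + (x(e := y)) e') * \<beta> e') = (\<Sum>e'\<in>B. (c e' + x e') * \<beta> e')"
        by (rule sum.cong) (use eB in auto)
      hence "\<phi> (x(e := y)) = \<phi> x" unfolding \<phi>_def by simp
      thus ?thesis unfolding N_def using sp by (simp add: indicator_def)
    qed
    have "(\<integral>\<^sup>+y. indicator N (x(e := y)) \<partial>M e) = (\<integral>\<^sup>+y. indicator {\<phi> x} y \<partial>M e)"
      unfolding ind ..
    also have "\<dots> = emeasure (M e) {\<phi> x}"
      by (rule nn_integral_indicator) (simp add: M_def)
    also have "\<dots> = emeasure lborel ({-\<epsilon><..<\<epsilon>} \<inter> {\<phi> x}) / emeasure lborel {-\<epsilon><..<\<epsilon>}"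
      unfolding M_def by (rule emeasure_uniform_measure) auto
    also have "\<dots> = 0"
    proof -
      have "emeasure lborel ({-\<epsilon><..<\<epsilon>} \<inter> {\<phi> x}) \<le> emeasure lborel {\<phi> x}"
        by (rule emeasure_mono) auto
      hence "emeasure lborel ({-\<epsilon><..<\<epsilon>} \<inter> {\<phi> x}) = 0" by (simp add: emeasure_lborel_singleton)
      thus ?thesis by simp
    qed
    finally show "(\<integral>\<^sup>+y. indicator N (x(e := y)) \<partial>M e) = 0" .
  qed
  also have "\<dots> = 0" by simp
  finally have "emeasure P N = 0" .
  hence "N \<in> null_sets P" using Nsets by (intro null_setsI)
  thus ?thesis unfolding N_def P_def M_def \<phi>_def .
qed




lemma null_bad:
  fixes E :: "('v::finite \<times> 'v) set" and w lam :: "'v \<times> 'v \<Rightarrow> real"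
  assumes eps: "0 < \<epsilon>" and BE: "B \<subseteq> E" and eE: "e \<in> E" and eB: "e \<notin> B"
  shows "AE \<delta> in PiM E (\<lambda>_. uniform_measure lborel {-\<epsilon><..<\<epsilon>}).
     \<not> (basis E (\<lambda>e. w e + \<delta> e) lam B \<and>
        (\<exists>x. solves_eqs B (\<lambda>e. w e + \<delta> e) lam x \<and> solves_eqs {e} (\<lambda>e. w e + \<delta> e) lam x))"
proof -
  define M :: "'v \<times> 'v \<Rightarrow> real measure" where "M = (\<lambda>_. uniform_measure lborel {-\<epsilon><..<\<epsilon>})"
  define P where "P = PiM E M"
  define f :: "real^'v \<Rightarrow> real^('v \<times> 'v)" where
    "f = (\<lambda>z. \<chi> e'. if e' \<in> B then z $ (fst e') - lam e' * z $ (snd e') else 0)"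
  have lin: "linear f"
    by (rule linearI) (auto simp: f_def vec_eq_iff algebra_simps)
  have inj_if: "inj f" if "\<exists>!x. solves_eqs B w' lam x" for w'
  proof (rule injI)
    fix z1 z2 assume eq: "f z1 = f z2"
    from that obtain x0 where x0: "solves_eqs B w' lam x0" and un: "\<And>x. solves_eqs B w' lam x \<Longrightarrow> x = x0"
      by blast
    define x1 where "x1 = (\<lambda>v. x0 v + (z1 $ v - z2 $ v))"
    have "solves_eqs B w' lam x1"
      unfolding solves_eqs_def
    proof (intro ballI, clarify)
      fix a b assume ab: "(a, b) \<in> B"
      have "f z1 $ (a, b) = f z2 $ (a, b)" using eq by simp
      hence "z1 $ a - lam (a, b) * z1 $ b = z2 $ a - lam (a, b) * z2 $ b" using ab unfolding f_def by simp
      moreover have "x0 a = w' (a, b) + lam (a, b) * x0 b" using x0 ab unfolding solves_eqs_def by blast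
      ultimately show "x1 a = w' (a, b) + lam (a, b) * x1 b" unfolding x1_def by (simp add: algebra_simps)
    qed
    hence "x1 = x0" by (rule un)
    hence "\<And>v. z1 $ v = z2 $ v" unfolding x1_def by (simp add: fun_eq_iff)
    thus "z1 = z2" by (simp add: vec_eq_iff)
  qed
  let ?bad = "\<lambda>\<delta>. basis E (\<lambda>e. w e + \<delta> e) lam B \<and>
        (\<exists>x. solves_eqs B (\<lambda>e. w e + \<delta> e) lam x \<and> solves_eqs {e} (\<lambda>e. w e + \<delta> e) lam x)"
  show ?thesis
  proof (cases "inj f")
    case False
    have "\<not> ?bad \<delta>" for \<delta> using inj_if False unfolding basis_def by blast
    thus ?thesis by simp
  next
    case True
    obtain g where g: "linear g" "g \<circ> f = id" using linear_injective_left_inverse[OF lin True] by blast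
    define h where "h = (\<lambda>e'. g (axis e' 1))"
    define \<beta> where "\<beta> = (\<lambda>e'. h e' $ fst e - lam e * h e' $ snd e)"
    define \<phi> where "\<phi> = (\<lambda>\<delta>::'v \<times> 'v \<Rightarrow> real. (\<Sum>e'\<in>B. (w e' + \<delta> e') * \<beta> e') - w e)"
    define N where "N = {\<delta> \<in> space P. \<delta> e = \<phi> \<delta>}"
    have finB: "finite B" by simp
    have sub: "{\<delta> \<in> space P. \<not> \<not> ?bad \<delta>} \<subseteq> N"
    proof (rule subsetI)
      fix \<delta> assume "\<delta> \<in> {\<delta> \<in> space P. \<not> \<not> ?bad \<delta>}"
      hence sp: "\<delta> \<in> space P" and "?bad \<delta>" by auto
      then obtain x where xs: "solves_eqs B (\<lambda>e. w e + \<delta> e) lam x" and xe: "solves_eqs {e} (\<lambda>e. w e + \<delta> e) lam x"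
        by blast
      let ?w' = "\<lambda>e. w e + \<delta> e"
      have fx: "f (\<chi> v. x v) = (\<chi> e'. if e' \<in> B then ?w' e' else 0)"
        using xs unfolding f_def solves_eqs_def by (auto simp: vec_eq_iff)
      have bsum: "(\<chi> e'. if e' \<in> B then ?w' e' else 0) = (\<Sum>e'\<in>B. ?w' e' *\<^sub>R axis e' 1)"
      proof -
        have "(\<Sum>e'\<in>B. ?w' e' *\<^sub>R axis e' 1) $ i = (\<Sum>e'\<in>B. if i = e' then ?w' e' else 0)" for i
          unfolding sum_component by (intro sum.cong) (auto simp: axis_def)
        thus ?thesis by (simp add: vec_eq_iff sum.delta')
      qed
      have "(\<chi> v. x v) = g (f (\<chi> v. x v))" using g(2) by (metis comp_apply id_apply)
      also have "\<dots> = (\<Sum>e'\<in>B. ?w' e' *\<^sub>R h e')"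
        unfolding fx bsum h_def using g(1) by (simp add: linear_sum linear_scale)
      finally have xvec: "(\<chi> v. x v) = (\<Sum>e'\<in>B. ?w' e' *\<^sub>R h e')" .
      have xv: "x v = (\<Sum>e'\<in>B. ?w' e' * h e' $ v)" for v
      proof -
        have "x v = (\<chi> v. x v) $ v" by simp
        also have "\<dots> = (\<Sum>e'\<in>B. ?w' e' *\<^sub>R h e') $ v" by (simp only: xvec)
        also have "\<dots> = (\<Sum>e'\<in>B. ?w' e' * h e' $ v)" by (simp add: sum_component)
        finally show ?thesis .
      qed
      have "?w' e = x (fst e) - lam e * x (snd e)" using xe unfolding solves_eqs_def by (cases e) auto
      also have "\<dots> = (\<Sum>e'\<in>B. ?w' e' * \<beta> e')"
        unfolding xv \<beta>_def by (simp add: sum_distrib_left sum_subtractf algebra_simps)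
      finally have "\<delta> e = \<phi> \<delta>" unfolding \<phi>_def by simp
      thus "\<delta> \<in> N" unfolding N_def using sp by simp
    qed
    have "N \<in> null_sets P"
      unfolding N_def P_def M_def \<phi>_def by (rule null_hyperplane[OF eps _ BE eE eB]) simp
    thus ?thesis unfolding P_def[symmetric] M_def[symmetric] by (rule AE_I'[OF _ sub])
  qed
qed




theorem corollary4p7:
  fixes Vmax :: "'v::finite set"
    and E :: "('v \<times> 'v) set"
    and w lam :: "'v \<times> 'v \<Rightarrow> real"
    and \<epsilon> :: real
  assumes "discounted_game E lam"
    and "\<exists>\<sigma>. joint_strategy E \<sigma> \<and> \<not> co_optimal Vmax E w lam \<sigma>"
    and "0 < \<epsilon>"
    and "\<epsilon> \<le> (1 - contraction E lam) / 3 * gap Vmax E w lam"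
  shows "(\<forall>\<delta>. (\<forall>e\<in>E. \<delta> e \<in> {-\<epsilon><..<\<epsilon>}) \<longrightarrow>
            (\<forall>\<sigma>. co_optimal Vmax E (\<lambda>e. w e + \<delta> e) lam \<sigma> \<longrightarrow> co_optimal Vmax E w lam \<sigma>))
       \<and> (AE \<delta> in PiM E (\<lambda>_. uniform_measure lborel {-\<epsilon><..<\<epsilon>}).
            sharp Vmax E (\<lambda>e. w e + \<delta> e) lam)"
proof (intro conjI allI impI)
  fix \<delta> \<sigma>
  assume "\<forall>e\<in>E. \<delta> e \<in> {-\<epsilon><..<\<epsilon>}" and "co_optimal Vmax E (\<lambda>e. w e + \<delta> e) lam \<sigma>"
  thus "co_optimal Vmax E w lam \<sigma>" using part1[OF assms(1) assms(3) assms(4)] by blast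
next
  let ?bad = "\<lambda>p \<delta>. basis E (\<lambda>e. w e + \<delta> e) lam (fst p) \<and>
        (\<exists>x. solves_eqs (fst p) (\<lambda>e. w e + \<delta> e) lam x \<and> solves_eqs {snd p} (\<lambda>e. w e + \<delta> e) lam x)"
  define S where "S = {p. fst p \<subseteq> E \<and> snd p \<in> E \<and> snd p \<notin> fst p}"
  have finS: "finite S"
  proof (rule finite_subset)
    show "S \<subseteq> Pow E \<times> E" unfolding S_def by auto
  qed simp
  have "AE \<delta> in PiM E (\<lambda>_. uniform_measure lborel {-\<epsilon><..<\<epsilon>}). \<forall>p\<in>S. \<not> ?bad p \<delta>"
  proof (rule AE_finite_allI[OF finS])
    fix p assume "p \<in> S"
    hence p: "fst p \<subseteq> E" "snd p \<in> E" "snd p \<notin> fst p" unfolding S_def by auto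
    show "AE \<delta> in PiM E (\<lambda>_. uniform_measure lborel {-\<epsilon><..<\<epsilon>}). \<not> ?bad p \<delta>"
      by (rule null_bad[OF assms(3) p])
  qed
  thus "AE \<delta> in PiM E (\<lambda>_. uniform_measure lborel {-\<epsilon><..<\<epsilon>}). sharp Vmax E (\<lambda>e. w e + \<delta> e) lam"
  proof (rule eventually_mono)
    fix \<delta> assume H: "\<forall>p\<in>S. \<not> ?bad p \<delta>"
    let ?w' = "\<lambda>e. w e + \<delta> e"
    show "sharp Vmax E ?w' lam"
      unfolding sharp_def
    proof (intro allI impI)
      fix B x assume a: "basis E ?w' lam B \<and> solves_eqs B ?w' lam x \<and> satisfies_H Vmax E ?w' lam x"
      have BE: "B \<subseteq> E" and cB: "card B = CARD('v)" using a unfolding basis_def by auto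
      have "{e \<in> E. solves_eqs {e} ?w' lam x} = B"
      proof (rule antisym)
        show "B \<subseteq> {e \<in> E. solves_eqs {e} ?w' lam x}"
          using a BE unfolding solves_eqs_def by auto
        show "{e \<in> E. solves_eqs {e} ?w' lam x} \<subseteq> B"
        proof (rule ccontr)
          assume "\<not> ?thesis"
          then obtain e where e: "e \<in> E" "solves_eqs {e} ?w' lam x" "e \<notin> B" by blast
          have "(B, e) \<in> S" unfolding S_def using BE e by auto
          moreover have "?bad (B, e) \<delta>" using a e by auto
          ultimately show False using H by blast
        qed
      qed
      thus "card {e \<in> E. solves_eqs {e} ?w' lam x} = CARD('v)" using cB by simp
    qed
  qed
qed


end
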